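(* Let $(Y,\|\cdot\|)$ be a normed space and $X$ its topological dual. Let $(g_n)$ be functions on $Y$ with: (a) each $g_n$ real-valued and convex; (b) $g_n\to g$ pointwise; (d'') there is $c>0$ with $|g_n(y)|\le c(1+\|y\|)$ for all $y\in Y$, $n\ge1$. Then $(g_n^* )$ $\Gamma$-converges to $g^*$ with respect to $\sigma(X,Y)$.
   Context: Convex conjugate: $g^*(x)=\sup_{y\in Y}\{\langle x,y\rangle-g(y)\}$, $x\in X$. $\Gamma$-limit: $\Gamma\text{-}\lim f_n(x)=\sup_{V\in\mathcal{N}(x)}\lim_n\inf_{y\in V}f_n(y)$. *)

theory Defs
  imports "HOL-Analysis.Analysis"
begin

definition weak_star_topology :: "('a::real_normed_vector \<Rightarrow>\<^sub>L real) topology" where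
  "weak_star_topology =
     topology_generated_by {{x. blinfun_apply x y \<in> U} | y U. open U}"

definition conjugate :: "('a::real_normed_vector \<Rightarrow> real) \<Rightarrow> ('a \<Rightarrow>\<^sub>L real) \<Rightarrow> ereal" where
  "conjugate g x = (SUP y. ereal (blinfun_apply x y - g y))"

definition nbhds_in :: "'b topology \<Rightarrow> 'b \<Rightarrow> 'b set set" where
  "nbhds_in T x = {V. \<exists>U. openin T U \<and> x \<in> U \<and> U \<subseteq> V}"

definition gamma_liminf :: "'b topology \<Rightarrow> (nat \<Rightarrow> 'b \<Rightarrow> ereal) \<Rightarrow> 'b \<Rightarrow> ereal" where
  "gamma_liminf T f x = (SUP V \<in> nbhds_in T x. liminf (\<lambda>n. INF z\<in>V. f n z))"

definition gamma_limsup :: "'b topology \<Rightarrow> (nat \<Rightarrow> 'b \<Rightarrow> ereal) \<Rightarrow> 'b \<Rightarrow> ereal" where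
  "gamma_limsup T f x = (SUP V \<in> nbhds_in T x. limsup (\<lambda>n. INF z\<in>V. f n z))"

definition gamma_converges :: "'b topology \<Rightarrow> (nat \<Rightarrow> 'b \<Rightarrow> ereal) \<Rightarrow> ('b \<Rightarrow> ereal) \<Rightarrow> bool" where
  "gamma_converges T f h \<longleftrightarrow> (\<forall>x. gamma_liminf T f x = h x \<and> gamma_limsup T f x = h x)"

end

theory Submission
  imports Defs
begin

definition sublin :: "('a::real_vector \<Rightarrow> real) \<Rightarrow> bool" where
  "sublin q \<longleftrightarrow> (\<forall>v w. q (v + w) \<le> q v + q w) \<and> (\<forall>t v. t > 0 \<longrightarrow> q (t *\<^sub>R v) \<le> t * q v)"

lemma sublinD1: "sublin q \<Longrightarrow> q (v + w) \<le> q v + q w"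
  by (simp add: sublin_def)
lemma sublinD2: "sublin q \<Longrightarrow> t > 0 \<Longrightarrow> q (t *\<^sub>R v) \<le> t * q v"
  by (simp add: sublin_def)

lemma sublin_zero: assumes "sublin q" shows "q 0 = 0"
proof -
  have "q ((2::real) *\<^sub>R 0) \<le> 2 * q 0" by (rule sublinD2[OF assms]) simp
  moreover have "q ((1/2::real) *\<^sub>R 0) \<le> (1/2) * q 0" by (rule sublinD2[OF assms]) simp
  ultimately show ?thesis by simp
qed

lemma sublin_homog: assumes "sublin q" "t \<ge> 0" shows "q (t *\<^sub>R v) = t * q v"
proof (cases "t = 0")
  case True then show ?thesis using sublin_zero[OF assms(1)] by simp
next
  case False
  then have t: "t > 0" using assms(2) by simp
  have "q v = q ((1/t) *\<^sub>R (t *\<^sub>R v))" using t by simp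
  also have "\<dots> \<le> (1/t) * q (t *\<^sub>R v)" by (rule sublinD2[OF assms(1)]) (use t in simp)
  finally have "t * q v \<le> q (t *\<^sub>R v)" using t by (simp add: field_simps)
  then show ?thesis using sublinD2[OF assms(1) t, of v] by simp
qed

lemma sublin_neg: assumes "sublin q" shows "- q (- v) \<le> q v"
  using sublinD1[OF assms, of v "-v"] sublin_zero[OF assms] by simp

lemma minimal_sublin_linear:
  assumes q: "sublin q"
    and minimal: "\<And>r. sublin r \<Longrightarrow> (\<forall>v. r v \<le> q v) \<Longrightarrow> r = q"
  shows "q (- a) = - q a"
proof -
  define F where "F v = (\<lambda>t. q (v + t *\<^sub>R a) - t * q a) ` {0..}" for v
  have lbt: "- q (- v) \<le> q (v + t *\<^sub>R a) - t * q a" if "t \<ge> 0" for v t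
  proof -
    have "q (t *\<^sub>R a) \<le> q (v + t *\<^sub>R a) + q (- v)"
      using sublinD1[OF q, of "v + t *\<^sub>R a" "-v"] by simp
    then show ?thesis using sublin_homog[OF q that, of a] by simp
  qed
  have bdd: "bdd_below (F v)" for v
    unfolding F_def by (rule bdd_belowI[of _ "- q (- v)"]) (auto intro: lbt)
  have ne: "F v \<noteq> {}" for v unfolding F_def by auto
  define r where "r v = Inf (F v)" for v
  have rle: "r v \<le> q (v + t *\<^sub>R a) - t * q a" if "t \<ge> 0" for v t
    unfolding r_def by (rule cInf_lower[OF _ bdd]) (use that in \<open>auto simp: F_def\<close>)
  have rge: "b \<le> r v" if "\<And>t. t \<ge> 0 \<Longrightarrow> b \<le> q (v + t *\<^sub>R a) - t * q a" for v b
    unfolding r_def by (rule cInf_greatest[OF ne]) (use that in \<open>auto simp: F_def\<close>)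
  have rq: "r v \<le> q v" for v using rle[of 0 v] by simp
  have "sublin r"
    unfolding sublin_def
  proof (intro conjI allI impI)
    fix v w
    have A: "r (v + w) \<le> (q (v + t *\<^sub>R a) - t * q a) + (q (w + s *\<^sub>R a) - s * q a)"
      if "t \<ge> 0" "s \<ge> 0" for t s
    proof -
      have "r (v + w) \<le> q (v + w + (t + s) *\<^sub>R a) - (t + s) * q a"
        using rle[of "t + s" "v + w"] that by simp
      also have "q (v + w + (t + s) *\<^sub>R a) \<le> q (v + t *\<^sub>R a) + q (w + s *\<^sub>R a)"
        using sublinD1[OF q, of "v + t *\<^sub>R a" "w + s *\<^sub>R a"] by (simp add: algebra_simps)
      finally show ?thesis by (simp add: algebra_simps)
    qed
    have B: "r (v + w) - (q (w + s *\<^sub>R a) - s * q a) \<le> r v" if "s \<ge> 0" for s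
      by (rule rge) (use A that in force)
    have "r (v + w) - r v \<le> r w"
      by (rule rge) (use B in force)
    then show "r (v + w) \<le> r v + r w" by simp
  next
    fix t :: real and v assume t: "t > 0"
    have "r (t *\<^sub>R v) / t \<le> r v"
    proof (rule rge)
      fix s :: real assume s: "s \<ge> 0"
      have "r (t *\<^sub>R v) \<le> q (t *\<^sub>R v + (t * s) *\<^sub>R a) - (t * s) * q a"
        using rle[of "t * s" "t *\<^sub>R v"] t s by simp
      also have "q (t *\<^sub>R v + (t * s) *\<^sub>R a) = t * q (v + s *\<^sub>R a)"
        using sublin_homog[OF q, of t "v + s *\<^sub>R a"] t by (simp add: algebra_simps)
      finally show "r (t *\<^sub>R v) / t \<le> q (v + s *\<^sub>R a) - s * q a"
        using t by (simp add: field_simps)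
    qed
    then show "r (t *\<^sub>R v) \<le> t * r v" using t by (simp add: field_simps)
  qed
  then have "r = q" using minimal rq by blast
  then have "q (- a) \<le> q (- a + 1 *\<^sub>R a) - 1 * q a" using rle[of 1 "-a"] by simp
  then have "q (- a) \<le> - q a" using sublin_zero[OF q] by simp
  then show ?thesis using sublin_neg[OF q, of a] by simp
qed

lemma sublin_linear:
  assumes "sublin q" "\<And>a. q (- a) = - q a"
  shows "q (v + w) = q v + q w" "q (t *\<^sub>R v) = t * q v"
proof -
  have "q v + q w = - q (- v) - q (- w)" using assms(2) by simp
  also have "\<dots> \<le> - q (- v + - w)" using sublinD1[OF assms(1), of "-v" "-w"] by simp
  also have "- v + - w = - (v + w)" by simp
  finally have "q v + q w \<le> - q (- (v + w))" .
  then show "q (v + w) = q v + q w" using sublinD1[OF assms(1), of v w] assms(2)[of "v+w"] by simp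
  show "q (t *\<^sub>R v) = t * q v"
  proof (cases "t \<ge> 0")
    case True then show ?thesis using sublin_homog[OF assms(1)] by simp
  next
    case False
    have "q (- v) = - q v" by (rule assms(2))
    moreover have "q ((- t) *\<^sub>R (- v)) = (- t) * q (- v)"
      by (rule sublin_homog[OF assms(1)]) (use False in simp)
    ultimately show ?thesis by simp
  qed
qed

lemma hahn_banach_sublin:
  fixes P :: "'a::real_vector \<Rightarrow> real"
  assumes P: "sublin P"
  shows "\<exists>u. (\<forall>v w. u (v + w) = u v + u w) \<and> (\<forall>t v. u (t *\<^sub>R v) = t * u v) \<and> (\<forall>v. u v \<le> P v)"
proof -
  define A where "A = {q. sublin q \<and> (\<forall>v. q v \<le> P v)}"
  define R where "R = (\<lambda>q1 q2::'a\<Rightarrow>real. \<forall>v::'a. q2 v \<le> q1 v)"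
  have po: "partial_order_on A (relation_of R A)"
    unfolding partial_order_on_def preorder_on_def refl_on_def trans_def antisym_def relation_of_def R_def
    by (auto intro: order_trans antisym ext) (meson antisym ext)
  have ch: "\<exists>u\<in>A. \<forall>a\<in>C. R a u" if C: "C \<in> Chains (relation_of R A)" for C
  proof (cases "C = {}")
    case True then show ?thesis using P unfolding A_def by auto
  next
    case False
    have CA: "C \<subseteq> A" using C unfolding Chains_def relation_of_def by auto
    have tot: "R a b \<or> R b a" if "a \<in> C" "b \<in> C" for a b
      using C that unfolding Chains_def relation_of_def by auto
    have bdd: "bdd_below ((\<lambda>q. q v) ` C)" for v
    proof (rule bdd_belowI[of _ "- P (- v)"])
      fix x assume "x \<in> (\<lambda>q. q v) ` C"
      then obtain q where "q \<in> C" "x = q v" by auto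
      then have "sublin q" "q (-v) \<le> P (-v)" using CA unfolding A_def by auto
      then show "- P (- v) \<le> x" using sublin_neg[of q v] \<open>x = q v\<close> by simp
    qed
    define u where "u v = Inf ((\<lambda>q. q v) ` C)" for v
    have ule: "u v \<le> q v" if "q \<in> C" for q v
      unfolding u_def by (rule cInf_lower[OF _ bdd]) (use that in auto)
    have uge: "b \<le> u v" if "\<And>q. q \<in> C \<Longrightarrow> b \<le> q v" for b v
      unfolding u_def by (rule cInf_greatest) (use False that in auto)
    have subl: "q \<in> C \<Longrightarrow> sublin q" for q using CA unfolding A_def by auto
    have "sublin u"
      unfolding sublin_def
    proof (intro conjI allI impI)
      fix v w
      have A1: "u (v + w) \<le> q1 v + q2 w" if "q1 \<in> C" "q2 \<in> C" for q1 q2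
      proof (cases "R q1 q2")
        case True
        then have "u (v + w) \<le> q2 (v + w)" using ule that by auto
        also have "\<dots> \<le> q2 v + q2 w" using sublinD1[OF subl[OF that(2)]] .
        also have "\<dots> \<le> q1 v + q2 w" using True unfolding R_def by auto
        finally show ?thesis .
      next
        case False
        then have F: "R q2 q1" using tot that by blast
        have "u (v + w) \<le> q1 (v + w)" using ule that by auto
        also have "\<dots> \<le> q1 v + q1 w" using sublinD1[OF subl[OF that(1)]] .
        also have "\<dots> \<le> q1 v + q2 w" using F unfolding R_def by auto
        finally show ?thesis .
      qed
      have B1: "u (v + w) - q2 w \<le> u v" if "q2 \<in> C" for q2
        by (rule uge) (use A1 that in force)
      have "u (v + w) - u v \<le> u w" by (rule uge) (use B1 in force)
      then show "u (v + w) \<le> u v + u w" by simp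
    next
      fix t :: real and v assume t: "t > 0"
      have "u (t *\<^sub>R v) / t \<le> u v"
      proof (rule uge)
        fix q assume "q \<in> C"
        then have "u (t *\<^sub>R v) \<le> t * q v" using ule[of q "t *\<^sub>R v"] sublinD2[OF subl[of q] t, of v] by linarith
        then show "u (t *\<^sub>R v) / t \<le> q v" using t by (simp add: field_simps)
      qed
      then show "u (t *\<^sub>R v) \<le> t * u v" using t by (simp add: field_simps)
    qed
    moreover have "u v \<le> P v" for v
    proof -
      obtain q where "q \<in> C" using False by auto
      then have "q \<in> A" using CA by blast
      then have "q v \<le> P v" unfolding A_def by blast
      then show ?thesis using ule[OF \<open>q \<in> C\<close>, of v] by linarith
    qed
    ultimately have "u \<in> A" unfolding A_def by auto
    moreover have "\<forall>a\<in>C. R a u" unfolding R_def using ule by auto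
    ultimately show ?thesis by blast
  qed
  obtain m where m: "m \<in> A" and mmax: "\<And>a. a \<in> A \<Longrightarrow> R m a \<Longrightarrow> a = m"
    using predicate_Zorn[OF po ch] by blast
  have ms: "sublin m" and mP: "\<forall>v. m v \<le> P v" using m unfolding A_def by auto
  have "m (- a) = - m a" for a
  proof (rule minimal_sublin_linear[OF ms])
    fix r assume "sublin r" "\<forall>v. r v \<le> m v"
    then have "r \<in> A" using mP unfolding A_def by (auto intro: order_trans)
    moreover have "R m r" unfolding R_def using \<open>\<forall>v. r v \<le> m v\<close> by simp
    ultimately show "r = m" using mmax by blast
  qed
  then show ?thesis using sublin_linear[OF ms] mP by blast
qed

lemma le_of_inv:
  fixes r A B :: real
  assumes "\<And>t. t \<ge> 1 \<Longrightarrow> r \<le> A / t + B" "A \<ge> 0"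
  shows "r \<le> B"
proof (rule ccontr)
  assume "\<not> r \<le> B"
  then have rb: "r - B > 0" by simp
  define t where "t = (A + 1) / (r - B) + 1"
  have "(A + 1) / (r - B) \<ge> 0" using rb assms(2) by (intro divide_nonneg_pos) auto
  then have t1: "t \<ge> 1" unfolding t_def by linarith
  have "t * (r - B) = A + 1 + (r - B)" unfolding t_def using rb by (simp add: field_simps)
  then have "t * (r - B) > A" using rb by linarith
  then have "A / t < r - B" using t1 by (simp add: field_simps)
  then show False using assms(1)[OF t1] by simp
qed

lemma convex_growth_lipschitz:
  fixes f :: "'a::real_normed_vector \<Rightarrow> real"
  assumes cv: "convex_on UNIV f" and gr: "\<And>y. \<bar>f y\<bar> \<le> c * (1 + norm y)" and c: "c > 0"
  shows "f y' - f y \<le> c * norm (y' - y)"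
proof -
  define K where "K = \<bar>f y\<bar> + c * (1 + norm y)"
  have K: "K \<ge> 0" unfolding K_def using c by simp
  have "f y' - f y \<le> K / t + c * norm (y' - y)" if t: "t \<ge> 1" for t
  proof -
    define \<mu> where "\<mu> = 1 / t"
    have mu: "0 \<le> \<mu>" "\<mu> \<le> 1" "\<mu> * t = 1" unfolding \<mu>_def using t by auto
    define z where "z = y + t *\<^sub>R (y' - y)"
    have "(1 - \<mu>) *\<^sub>R y + \<mu> *\<^sub>R z = y + (\<mu> * t) *\<^sub>R (y' - y)"
      unfolding z_def by (simp add: algebra_simps)
    also have "\<dots> = y'" using mu by simp
    finally have eq: "(1 - \<mu>) *\<^sub>R y + \<mu> *\<^sub>R z = y'" .
    have "f y' \<le> (1 - \<mu>) * f y + \<mu> * f z"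
      using convex_onD[OF cv mu(1) mu(2), of y z] eq by simp
    moreover have "f z \<le> c * (1 + norm y + t * norm (y' - y))"
    proof -
      have "norm z \<le> norm y + t * norm (y' - y)" unfolding z_def using t
        by (metis abs_of_nonneg dual_order.trans norm_scaleR norm_triangle_ineq order_refl zero_le_one)
      then show ?thesis using gr[of z] c by (smt (verit) mult_left_mono)
    qed
    ultimately have "f y' \<le> (1 - \<mu>) * f y + \<mu> * (c * (1 + norm y + t * norm (y' - y)))"
      using mu(1) by (smt (verit) mult_left_mono)
    also have "\<dots> = f y + \<mu> * (c * (1 + norm y) - f y) + c * norm (y' - y)"
      using mu(3) by (simp add: algebra_simps)
    also have "\<mu> * (c * (1 + norm y) - f y) \<le> \<mu> * K"
      unfolding K_def using mu(1) by (intro mult_left_mono) auto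
    finally show ?thesis unfolding \<mu>_def by simp
  qed
  then show ?thesis using le_of_inv[OF _ K] by blast
qed

lemma convex_growth_lipschitz_abs:
  fixes f :: "'a::real_normed_vector \<Rightarrow> real"
  assumes "convex_on UNIV f" "\<And>y. \<bar>f y\<bar> \<le> c * (1 + norm y)" "c > 0"
  shows "\<bar>f y - f y'\<bar> \<le> c * norm (y - y')"
  using convex_growth_lipschitz[OF assms, of y y'] convex_growth_lipschitz[OF assms, of y' y]
  by (simp add: norm_minus_commute abs_le_iff)

definition fbox :: "'a::real_normed_vector set \<Rightarrow> real \<Rightarrow> 'a set" where
  "fbox F T = {(\<Sum>y\<in>F. b y *\<^sub>R y) | b. \<forall>y\<in>F. \<bar>b y\<bar> \<le> T}"

lemma compact_fbox: "finite (F::'a::real_normed_vector set) \<Longrightarrow> compact (fbox F T)"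
proof (induction F rule: finite_induct)
  case empty
  have "fbox ({}::'a set) T = {0}" unfolding fbox_def by auto
  then show ?case by simp
next
  case (insert y F)
  have "fbox (insert y F) T = (\<lambda>(w, \<beta>). w + \<beta> *\<^sub>R y) ` (fbox F T \<times> {-T..T})"
  proof (intro set_eqI iffI)
    fix v assume "v \<in> fbox (insert y F) T"
    then obtain b where v: "v = (\<Sum>z\<in>insert y F. b z *\<^sub>R z)" and b: "\<forall>z\<in>insert y F. \<bar>b z\<bar> \<le> T"
      unfolding fbox_def by auto
    have "v = (\<Sum>z\<in>F. b z *\<^sub>R z) + b y *\<^sub>R y" using v insert by (simp add: add.commute)
    moreover have "(\<Sum>z\<in>F. b z *\<^sub>R z) \<in> fbox F T" unfolding fbox_def using b by auto
    moreover have "b y \<in> {-T..T}" using b by auto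
    ultimately show "v \<in> (\<lambda>(w, \<beta>). w + \<beta> *\<^sub>R y) ` (fbox F T \<times> {-T..T})" by force
  next
    fix v assume "v \<in> (\<lambda>(w, \<beta>). w + \<beta> *\<^sub>R y) ` (fbox F T \<times> {-T..T})"
    then obtain w \<beta> where v: "v = w + \<beta> *\<^sub>R y" and w: "w \<in> fbox F T" and be: "\<beta> \<in> {-T..T}" by auto
    then obtain b where wb: "w = (\<Sum>z\<in>F. b z *\<^sub>R z)" and b: "\<forall>z\<in>F. \<bar>b z\<bar> \<le> T"
      unfolding fbox_def by auto
    define b' where "b' = b(y := \<beta>)"
    have "(\<Sum>z\<in>F. b' z *\<^sub>R z) = w" unfolding wb b'_def using insert by (intro sum.cong) auto
    then have "v = (\<Sum>z\<in>insert y F. b' z *\<^sub>R z)" using v insert by (simp add: b'_def add.commute)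
    moreover have "\<forall>z\<in>insert y F. \<bar>b' z\<bar> \<le> T" using b be unfolding b'_def by auto
    ultimately show "v \<in> fbox (insert y F) T" unfolding fbox_def by blast
  qed
  moreover have "compact ((\<lambda>(w, \<beta>). w + \<beta> *\<^sub>R y) ` (fbox F T \<times> {-T..T}))"
    by (intro compact_continuous_image compact_Times insert.IH compact_Icc)
       (auto intro!: continuous_intros simp: case_prod_unfold)
  ultimately show ?case by simp
qed

lemma eventually_uniform_pos:
  fixes hs :: "nat \<Rightarrow> 'a::real_normed_vector \<Rightarrow> real"
  assumes K: "compact K" and C: "C > 0"
    and lip: "\<And>n y y'. \<bar>hs n y - hs n y'\<bar> \<le> C * norm (y - y')"
    and lim: "\<And>y. (\<lambda>n. hs n y) \<longlonglongrightarrow> l y" and e: "e > 0" and le: "\<And>y. l y \<ge> e"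
  shows "eventually (\<lambda>n. \<forall>y\<in>K. hs n y \<ge> 0) sequentially"
proof -
  have eC: "e / (2 * C) > 0" using e C by simp
  obtain k where k: "finite k" "K \<subseteq> (\<Union>x\<in>k. ball x (e / (2 * C)))"
    using K eC unfolding compact_eq_totally_bounded by blast
  have ev1: "eventually (\<lambda>n. e / 2 < hs n x) sequentially" for x
  proof -
    have "e / 2 < l x" using le[of x] e by linarith
    then show ?thesis by (rule order_tendstoD(1)[OF lim])
  qed
  have "eventually (\<lambda>n. \<forall>x\<in>k. e / 2 < hs n x) sequentially"
    by (rule eventually_ball_finite[OF k(1)]) (use ev1 in blast)
  then show ?thesis
  proof (rule eventually_mono)
    fix n assume A: "\<forall>x\<in>k. e / 2 < hs n x"
    show "\<forall>y\<in>K. hs n y \<ge> 0"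
    proof
      fix y assume "y \<in> K"
      then obtain x where x: "x \<in> k" "dist x y < e / (2 * C)" using k(2) by auto
      have l1: "\<bar>hs n y - hs n x\<bar> \<le> C * norm (y - x)" by (rule lip)
      have "norm (y - x) = dist x y" by (simp add: dist_norm norm_minus_commute)
      then have "C * norm (y - x) \<le> C * (e / (2 * C))" using x(2) C by (intro mult_left_mono) auto
      also have "\<dots> = e / 2" using C by simp
      finally have l2: "C * norm (y - x) \<le> e / 2" .
      have "e / 2 < hs n x" using A x(1) by blast
      then show "hs n y \<ge> 0" using l1 l2 by linarith
    qed
  qed
qed

lemma core_pos:
  fixes h :: "'a::real_normed_vector \<Rightarrow> real"
  assumes cv: "convex_on UNIV h" and F: "finite F" and d: "d > 0" and B: "B > 0" and h0: "h 0 \<le> B"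
    and pos: "\<forall>w\<in>fbox F (B / d). h w \<ge> 0"
  shows "h (\<Sum>y\<in>F. a y *\<^sub>R y) + d * (\<Sum>y\<in>F. \<bar>a y\<bar>) \<ge> 0"
proof -
  define T where "T = B / d"
  have T: "T > 0" unfolding T_def using B d by simp
  define m where "m = (\<Sum>y\<in>F. \<bar>a y\<bar>)"
  have m0: "m \<ge> 0" unfolding m_def by (simp add: sum_nonneg)
  have ay: "\<bar>a y\<bar> \<le> m" if "y \<in> F" for y
    unfolding m_def by (rule member_le_sum[OF that _ F]) simp
  show ?thesis
  proof (cases "m \<le> T")
    case True
    then have "(\<Sum>y\<in>F. a y *\<^sub>R y) \<in> fbox F T" unfolding fbox_def using ay by (force intro: order_trans)
    then have "h (\<Sum>y\<in>F. a y *\<^sub>R y) \<ge> 0" using pos unfolding T_def by blast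
    then show ?thesis using m0 d unfolding m_def by simp
  next
    case False
    then have mT: "m > T" by simp
    define \<mu> where "\<mu> = T / m"
    have mu: "0 < \<mu>" "\<mu> \<le> 1" unfolding \<mu>_def using mT T by auto
    have E1: "\<mu> *\<^sub>R (\<Sum>y\<in>F. a y *\<^sub>R y) = (\<Sum>y\<in>F. (\<mu> * a y) *\<^sub>R y)"
      by (simp add: scaleR_sum_right)
    have E2: "\<bar>\<mu> * a y\<bar> \<le> T" if "y \<in> F" for y
    proof -
      have "\<bar>\<mu> * a y\<bar> = \<mu> * \<bar>a y\<bar>" using mu by (simp add: abs_mult)
      also have "\<dots> \<le> \<mu> * m" using ay[OF that] mu by (intro mult_left_mono) auto
      also have "\<dots> = T" unfolding \<mu>_def using mT T by simp
      finally show ?thesis .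
    qed
    have "\<exists>b. \<mu> *\<^sub>R (\<Sum>y\<in>F. a y *\<^sub>R y) = (\<Sum>y\<in>F. b y *\<^sub>R y) \<and> (\<forall>y\<in>F. \<bar>b y\<bar> \<le> T)"
      by (rule exI[of _ "\<lambda>y. \<mu> * a y"]) (intro conjI ballI E1 E2)
    then have "\<mu> *\<^sub>R (\<Sum>y\<in>F. a y *\<^sub>R y) \<in> fbox F T" unfolding fbox_def by blast
    then have p: "h (\<mu> *\<^sub>R (\<Sum>y\<in>F. a y *\<^sub>R y)) \<ge> 0" using pos unfolding T_def by blast
    have "h ((1 - \<mu>) *\<^sub>R 0 + \<mu> *\<^sub>R (\<Sum>y\<in>F. a y *\<^sub>R y)) \<le> (1 - \<mu>) * h 0 + \<mu> * h (\<Sum>y\<in>F. a y *\<^sub>R y)"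
      by (rule convex_onD[OF cv]) (use mu in auto)
    then have "0 \<le> (1 - \<mu>) * h 0 + \<mu> * h (\<Sum>y\<in>F. a y *\<^sub>R y)" using p by simp
    moreover have "(1 - \<mu>) * h 0 \<le> (1 - \<mu>) * B" using h0 mu by (intro mult_left_mono) auto
    moreover have "(1 - \<mu>) * B \<le> B" using mu B by (simp add: algebra_simps)
    ultimately have X: "- B \<le> \<mu> * h (\<Sum>y\<in>F. a y *\<^sub>R y)" by linarith
    have "- B / \<mu> \<le> h (\<Sum>y\<in>F. a y *\<^sub>R y)"
      using X mu(1) by (subst pos_divide_le_eq) (auto simp: mult.commute)
    moreover have "B / \<mu> = d * m"
    proof -
      have m0': "m \<noteq> 0" using mT T by simp
      have "B / \<mu> = B * m / T" unfolding \<mu>_def using m0' T by simp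
      also have "\<dots> = d * m" unfolding T_def using B d by simp
      finally show ?thesis .
    qed
    ultimately have "- (d * m) \<le> h (\<Sum>y\<in>F. a y *\<^sub>R y)" by simp
    then show ?thesis unfolding m_def by simp
  qed
qed

lemma sum_delta_scale:
  fixes y0 :: "'a::real_vector"
  assumes "finite F" "y0 \<in> F"
  shows "(\<Sum>y\<in>F. (if y = y0 then t else 0) *\<^sub>R y) = t *\<^sub>R y0"
    and "(\<Sum>y\<in>F. \<bar>if y = y0 then t else 0\<bar>) = \<bar>t\<bar>"
proof -
  have "(\<Sum>y\<in>F. (if y = y0 then t else 0) *\<^sub>R y) = (\<Sum>y\<in>F. if y = y0 then t *\<^sub>R y0 else 0)"
    by (rule sum.cong) auto
  also have "\<dots> = t *\<^sub>R y0" using assms by simp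
  finally show "(\<Sum>y\<in>F. (if y = y0 then t else 0) *\<^sub>R y) = t *\<^sub>R y0" .
  have "(\<Sum>y\<in>F. \<bar>if y = y0 then t else 0\<bar>) = (\<Sum>y\<in>F. if y = y0 then \<bar>t\<bar> else 0)"
    by (rule sum.cong) auto
  also have "\<dots> = \<bar>t\<bar>" using assms by simp
  finally show "(\<Sum>y\<in>F. \<bar>if y = y0 then t else 0\<bar>) = \<bar>t\<bar>" .
qed

lemma construct:
  fixes h :: "'a::real_normed_vector \<Rightarrow> real"
  assumes cv: "convex_on UNIV h" and F: "finite F" and d: "d > 0" and C: "C \<ge> 0"
    and lip: "\<And>y y'. \<bar>h y - h y'\<bar> \<le> C * norm (y - y')"
    and H: "\<And>a. h (\<Sum>y\<in>F. a y *\<^sub>R y) + d * (\<Sum>y\<in>F. \<bar>a y\<bar>) \<ge> 0"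
  shows "\<exists>u. bounded_linear u \<and> (\<forall>y. u y \<le> h y) \<and> (\<forall>y\<in>F. \<bar>u y\<bar> \<le> d)"
proof -
  define S where "S a = (\<Sum>y\<in>F. a y *\<^sub>R y)" for a :: "'a \<Rightarrow> real"
  define N where "N a = (\<Sum>y\<in>F. \<bar>a y\<bar>)" for a :: "'a \<Rightarrow> real"
  define \<Phi> where "\<Phi> v t a = (h (t *\<^sub>R v - S a) + d * N a) / t" for v t a
  define P where "P v = Inf {\<Phi> v t a | t a. t > 0}" for v
  have Sneg: "S (\<lambda>y. - a y) = - S a" for a unfolding S_def by (simp add: sum_negf)
  have Nneg: "N (\<lambda>y. - a y) = N a" for a unfolding N_def by simp
  have N0: "N a \<ge> 0" for a unfolding N_def by (simp add: sum_nonneg)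
  have Scomb: "S (\<lambda>y. p * a y + q * b y) = p *\<^sub>R S a + q *\<^sub>R S b" for p q a b
    unfolding S_def by (simp add: scaleR_add_left sum.distrib scaleR_sum_right)
  have Ncomb: "N (\<lambda>y. p * a y + q * b y) \<le> p * N a + q * N b" if "p \<ge> 0" "q \<ge> 0" for p q a b
  proof -
    have "N (\<lambda>y. p * a y + q * b y) \<le> (\<Sum>y\<in>F. p * \<bar>a y\<bar> + q * \<bar>b y\<bar>)"
      unfolding N_def by (rule sum_mono) (use that in \<open>simp add: abs_mult abs_triangle_ineq[THEN order_trans]\<close>)
    also have "\<dots> = p * N a + q * N b" unfolding N_def by (simp add: sum.distrib sum_distrib_left)
    finally show ?thesis .
  qed
  have H': "h (- S a) + d * N a \<ge> 0" for a
    using H[of "\<lambda>y. - a y"] Sneg[of a] Nneg[of a] unfolding S_def N_def by simp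
  have h0: "h 0 \<ge> 0" using H[of "\<lambda>y. 0"] by simp
  have lb: "\<Phi> v t a \<ge> - C * norm v" if t: "t > 0" for v t a
  proof -
    have "\<bar>h (t *\<^sub>R v - S a) - h (- S a)\<bar> \<le> C * norm (t *\<^sub>R v - S a - - S a)" by (rule lip)
    also have "norm (t *\<^sub>R v - S a - - S a) = t * norm v" using t by simp
    finally have "h (t *\<^sub>R v - S a) \<ge> h (- S a) - C * (t * norm v)" by linarith
    then have "h (t *\<^sub>R v - S a) + d * N a \<ge> - C * (t * norm v)" using H'[of a] by linarith
    then have "- C * norm v \<le> (h (t *\<^sub>R v - S a) + d * N a) / t" using t
      by (subst pos_le_divide_eq) (auto simp: algebra_simps)
    then show ?thesis unfolding \<Phi>_def .
  qed
  have bdd: "bdd_below {\<Phi> v t a | t a. t > 0}" for v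
    by (rule bdd_belowI[of _ "- C * norm v"]) (use lb in auto)
  have ne: "{\<Phi> v t a | t a. t > 0} \<noteq> {}" for v
  proof -
    have "\<Phi> v 1 (\<lambda>y. 0) \<in> {\<Phi> v t a | t a. t > 0}" using zero_less_one by blast
    then show ?thesis by blast
  qed
  have Ple: "P v \<le> \<Phi> v t a" if "t > 0" for v t a
    unfolding P_def by (rule cInf_lower[OF _ bdd]) (use that in blast)
  have Pge: "b \<le> P v" if "\<And>t a. t > 0 \<Longrightarrow> b \<le> \<Phi> v t a" for b v
    unfolding P_def by (rule cInf_greatest[OF ne]) (use that in blast)
  have "sublin P"
    unfolding sublin_def
  proof (intro conjI allI impI)
    fix v w
    have key: "P (v + w) \<le> \<Phi> v t a + \<Phi> w s b" if t: "t > 0" and s: "s > 0" for t s a b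
    proof -
      define r where "r = t * s / (t + s)"
      define l where "l = t / (t + s)"
      have r: "r > 0" unfolding r_def using t s by simp
      have l: "0 \<le> l" "l \<le> 1" unfolding l_def using t s by auto
      have r1: "(1 - l) * t = r" "l * s = r" unfolding l_def r_def using t s by (simp_all add: field_simps)
      define c where "c = (\<lambda>y. (1 - l) * a y + l * b y)"
      define A where "A = t *\<^sub>R v - S a"
      define B where "B = s *\<^sub>R w - S b"
      have eq: "r *\<^sub>R (v + w) - S c = (1 - l) *\<^sub>R A + l *\<^sub>R B"
      proof -
        have "(1 - l) *\<^sub>R A + l *\<^sub>R B = ((1 - l) * t) *\<^sub>R v + (l * s) *\<^sub>R w - ((1 - l) *\<^sub>R S a + l *\<^sub>R S b)"
          unfolding A_def B_def by (simp add: algebra_simps)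
        also have "\<dots> = r *\<^sub>R (v + w) - S c" unfolding r1 c_def Scomb by (simp add: algebra_simps)
        finally show ?thesis by simp
      qed
      have hc: "h (r *\<^sub>R (v + w) - S c) \<le> (1 - l) * h A + l * h B"
        unfolding eq by (rule convex_onD[OF cv l]) auto
      have nc: "N c \<le> (1 - l) * N a + l * N b" unfolding c_def by (rule Ncomb) (use l in auto)
      have num: "h (r *\<^sub>R (v + w) - S c) + d * N c \<le> (1 - l) * (h A + d * N a) + l * (h B + d * N b)"
        using hc mult_left_mono[OF nc, of d] d by (simp add: algebra_simps)
      have "\<Phi> (v + w) r c = (h (r *\<^sub>R (v + w) - S c) + d * N c) / r" unfolding \<Phi>_def ..
      also have "\<dots> \<le> ((1 - l) * (h A + d * N a) + l * (h B + d * N b)) / r"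
        using num r by (simp add: divide_right_mono)
      also have "\<dots> = (h A + d * N a) / t + (h B + d * N b) / s"
      proof -
        have "(1 - l) / r = 1 / t" "l / r = 1 / s" using r1 t s r by (simp_all add: field_simps)
        have "((1 - l) * (h A + d * N a) + l * (h B + d * N b)) / r
            = ((1 - l) / r) * (h A + d * N a) + (l / r) * (h B + d * N b)"
          by (simp add: add_divide_distrib)
        also have "\<dots> = (h A + d * N a) / t + (h B + d * N b) / s"
          unfolding \<open>(1 - l) / r = 1 / t\<close> \<open>l / r = 1 / s\<close> by simp
        finally show ?thesis .
      qed
      also have "\<dots> = \<Phi> v t a + \<Phi> w s b" unfolding \<Phi>_def A_def B_def ..
      finally show ?thesis using Ple[OF r, of "v + w" c] by linarith
    qed
    have k2: "P (v + w) - \<Phi> w s b \<le> P v" if s: "s > 0" for s b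
    proof (rule Pge)
      fix t a assume "(t::real) > 0"
      then show "P (v + w) - \<Phi> w s b \<le> \<Phi> v t a" using key[of t s a b] s by linarith
    qed
    have "P (v + w) - P w \<le> P v"
    proof -
      have "P (v + w) - P v \<le> P w"
      proof (rule Pge)
        fix s b assume "(s::real) > 0"
        then show "P (v + w) - P v \<le> \<Phi> w s b" using k2[of s b] by linarith
      qed
      then show ?thesis by linarith
    qed
    then show "P (v + w) \<le> P v + P w" by linarith
  next
    fix \<mu> :: real and v assume mu: "\<mu> > 0"
    have "P (\<mu> *\<^sub>R v) / \<mu> \<le> P v"
    proof (rule Pge)
      fix t :: real and a assume t: "t > 0"
      have "P (\<mu> *\<^sub>R v) \<le> \<Phi> (\<mu> *\<^sub>R v) (t / \<mu>) a" using Ple t mu by simp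
      also have "\<Phi> (\<mu> *\<^sub>R v) (t / \<mu>) a = \<mu> * \<Phi> v t a"
        unfolding \<Phi>_def using mu by (simp add: field_simps)
      finally show "P (\<mu> *\<^sub>R v) / \<mu> \<le> \<Phi> v t a" using mu by (simp add: field_simps)
    qed
    then show "P (\<mu> *\<^sub>R v) \<le> \<mu> * P v" using mu by (simp add: field_simps)
  qed
  then obtain u where uadd: "\<And>v w. u (v + w) = u v + u w" and uscale: "\<And>t v. u (t *\<^sub>R v) = t * u v"
    and uP: "\<And>v. u v \<le> P v"
    using hahn_banach_sublin by blast
  have S0: "S (\<lambda>y. 0) = 0" "N (\<lambda>y. 0) = 0" unfolding S_def N_def by simp_all
  have uh: "u y \<le> h y" for y
    using uP[of y] Ple[of 1 y "\<lambda>y. 0"] S0 unfolding \<Phi>_def by simp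
  have ub: "u v \<le> C * norm v" for v
  proof (rule le_of_inv[OF _ h0])
    fix t :: real assume t: "t \<ge> 1"
    have "u v \<le> \<Phi> v t (\<lambda>y. 0)" using uP[of v] Ple[of t v "\<lambda>y. 0"] t by simp
    also have "\<dots> = h (t *\<^sub>R v) / t" unfolding \<Phi>_def S0 by simp
    also have "h (t *\<^sub>R v) \<le> h 0 + C * (t * norm v)" using lip[of "t *\<^sub>R v" 0] t by simp
    then have "h (t *\<^sub>R v) / t \<le> (h 0 + C * (t * norm v)) / t" using t by (simp add: divide_right_mono)
    also have "\<dots> = h 0 / t + C * norm v" using t by (simp add: field_simps)
    finally show "u v \<le> h 0 / t + C * norm v" .
  qed
  have uneg: "u (- v) = - u v" for v using uscale[of "-1" v] by simp
  have uabs: "\<bar>u v\<bar> \<le> C * norm v" for v using ub[of v] ub[of "-v"] uneg[of v] by simp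
  have bl: "bounded_linear u"
    by (rule bounded_linear_intro[of _ C]) (use uadd uscale uabs in \<open>auto simp: mult.commute\<close>)
  have uF: "\<bar>u y0\<bar> \<le> d" if y0: "y0 \<in> F" for y0
  proof -
    define e where "e t = (\<lambda>y. if y = y0 then t else 0::real)" for t
    have Se: "S (e t) = t *\<^sub>R y0" "N (e t) = \<bar>t\<bar>" for t
      unfolding S_def N_def e_def using sum_delta_scale[OF F y0] by auto
    have "u y0 \<le> d"
    proof (rule le_of_inv[OF _ h0])
      fix t :: real assume t: "t \<ge> 1"
      have "u y0 \<le> \<Phi> y0 t (e t)" using uP[of y0] Ple[of t y0 "e t"] t by simp
      also have "\<dots> = h 0 / t + d" unfolding \<Phi>_def Se using t by (simp add: field_simps)
      finally show "u y0 \<le> h 0 / t + d" .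
    qed
    moreover have "u (- y0) \<le> d"
    proof (rule le_of_inv[OF _ h0])
      fix t :: real assume t: "t \<ge> 1"
      have "u (- y0) \<le> \<Phi> (- y0) t (\<lambda>y. - e t y)" using uP[of "-y0"] Ple[of t "-y0" "\<lambda>y. - e t y"] t by simp
      also have "\<dots> = h 0 / t + d" unfolding \<Phi>_def Sneg Nneg Se using t by (simp add: field_simps)
      finally show "u (- y0) \<le> h 0 / t + d" .
    qed
    ultimately show ?thesis using uneg[of y0] by simp
  qed
  show ?thesis using bl uh uF by blast
qed

lemma convex_shift:
  fixes f :: "'a::real_normed_vector \<Rightarrow> real"
  assumes "convex_on UNIV f" "bounded_linear x"
  shows "convex_on UNIV (\<lambda>y. f y - x y + r)"
proof -
  interpret bounded_linear x by fact
  show ?thesis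
  proof (rule convex_onI[OF _ convex_UNIV])
    fix u v :: 'a and t :: real assume t0: "0 < t" "t < 1"
    then have t: "0 \<le> t \<and> t \<le> 1" by simp
    have "f ((1 - t) *\<^sub>R u + t *\<^sub>R v) \<le> (1 - t) * f u + t * f v"
      using convex_onD[OF assms(1)] t by auto
    moreover have "x ((1 - t) *\<^sub>R u + t *\<^sub>R v) = (1 - t) * x u + t * x v" by (simp add: add scale)
    ultimately show "f ((1 - t) *\<^sub>R u + t *\<^sub>R v) - x ((1 - t) *\<^sub>R u + t *\<^sub>R v) + r
        \<le> (1 - t) * (f u - x u + r) + t * (f v - x v + r)" by (simp add: algebra_simps)
  qed
qed

lemma weak_open_nbhd:
  assumes "openin weak_star_topology U" "x \<in> U"
  shows "\<exists>F \<delta>. finite F \<and> \<delta> > 0 \<and> {z. \<forall>y\<in>F. \<bar>blinfun_apply z y - blinfun_apply x y\<bar> < \<delta>} \<subseteq> U"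
proof -
  have "generate_topology_on {{x. blinfun_apply x y \<in> U} | y U. open U} U"
    using assms(1) unfolding weak_star_topology_def openin_topology_generated_by_iff .
  then have "\<forall>x\<in>U. \<exists>F \<delta>. finite F \<and> \<delta> > 0 \<and> {z. \<forall>y\<in>F. \<bar>blinfun_apply z y - blinfun_apply x y\<bar> < \<delta>} \<subseteq> U"
  proof (induction rule: generate_topology_on.induct)
    case Empty then show ?case by simp
  next
    case (Int a b)
    show ?case
    proof
      fix x assume "x \<in> a \<inter> b"
      then have xa: "x \<in> a" and xb: "x \<in> b" by auto
      obtain F1 d1 where A: "finite F1" "d1 > 0" "{z. \<forall>y\<in>F1. \<bar>blinfun_apply z y - blinfun_apply x y\<bar> < d1} \<subseteq> a"
        using Int(3) xa by meson
      obtain F2 d2 where B: "finite F2" "d2 > 0" "{z. \<forall>y\<in>F2. \<bar>blinfun_apply z y - blinfun_apply x y\<bar> < d2} \<subseteq> b"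
        using Int(4) xb by meson
      show "\<exists>F \<delta>. finite F \<and> \<delta> > 0 \<and> {z. \<forall>y\<in>F. \<bar>blinfun_apply z y - blinfun_apply x y\<bar> < \<delta>} \<subseteq> a \<inter> b"
      proof (intro exI conjI)
        show "finite (F1 \<union> F2)" using A B by simp
        show "min d1 d2 > 0" using A B by simp
        show "{z. \<forall>y\<in>F1 \<union> F2. \<bar>blinfun_apply z y - blinfun_apply x y\<bar> < min d1 d2} \<subseteq> a \<inter> b"
        proof
          fix z assume z: "z \<in> {z. \<forall>y\<in>F1 \<union> F2. \<bar>blinfun_apply z y - blinfun_apply x y\<bar> < min d1 d2}"
          then have "z \<in> {z. \<forall>y\<in>F1. \<bar>blinfun_apply z y - blinfun_apply x y\<bar> < d1}" by auto
          moreover have "z \<in> {z. \<forall>y\<in>F2. \<bar>blinfun_apply z y - blinfun_apply x y\<bar> < d2}" using z by auto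
          ultimately show "z \<in> a \<inter> b" using A(3) B(3) by blast
        qed
      qed
    qed
  next
    case (UN K)
    show ?case
    proof
      fix x assume "x \<in> \<Union> K"
      then obtain k where k: "k \<in> K" "x \<in> k" by auto
      then obtain F \<delta> where "finite F" "\<delta> > 0" "{z. \<forall>y\<in>F. \<bar>blinfun_apply z y - blinfun_apply x y\<bar> < \<delta>} \<subseteq> k"
        using UN.IH by blast
      moreover have "k \<subseteq> \<Union> K" using k by blast
      ultimately show "\<exists>F \<delta>. finite F \<and> \<delta> > 0 \<and> {z. \<forall>y\<in>F. \<bar>blinfun_apply z y - blinfun_apply x y\<bar> < \<delta>} \<subseteq> \<Union> K"
        by blast
    qed
  next
    case (Basis s)
    then obtain y W where s: "s = {x. blinfun_apply x y \<in> W}" and W: "open W" by blast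
    show ?case
    proof
      fix x assume "x \<in> s"
      then have "blinfun_apply x y \<in> W" using s by simp
      then obtain e where e: "e > 0" "\<And>r. dist r (blinfun_apply x y) < e \<Longrightarrow> r \<in> W"
        using W unfolding open_dist by blast
      have "{z. \<forall>y'\<in>{y}. \<bar>blinfun_apply z y' - blinfun_apply x y'\<bar> < e} \<subseteq> s"
      proof
        fix z assume "z \<in> {z. \<forall>y'\<in>{y}. \<bar>blinfun_apply z y' - blinfun_apply x y'\<bar> < e}"
        then have "dist (blinfun_apply z y) (blinfun_apply x y) < e" unfolding dist_real_def by simp
        then show "z \<in> s" using e(2) unfolding s by simp
      qed
      then show "\<exists>F \<delta>. finite F \<and> \<delta> > 0 \<and> {z. \<forall>y\<in>F. \<bar>blinfun_apply z y - blinfun_apply x y\<bar> < \<delta>} \<subseteq> s"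
        using e(1) by blast
    qed
  qed
  then show ?thesis using assms(2) by blast
qed

lemma weak_basic_open:
  "openin weak_star_topology {z. blinfun_apply z y \<in> W}" if "open W"
  unfolding weak_star_topology_def openin_topology_generated_by_iff
  by (rule generate_topology_on.Basis) (use that in blast)

lemma ereal_real_eps:
  fixes X :: ereal
  assumes "\<And>e. e > 0 \<Longrightarrow> ereal (a - e) \<le> X"
  shows "ereal a \<le> X"
proof (rule ereal_le_epsilon2)
  fix e :: real assume e: "e > 0"
  have "ereal a = ereal (a - e) + ereal e" by simp
  also have "\<dots> \<le> X + ereal e" using assms[OF e] by (intro add_right_mono)
  finally show "ereal a \<le> X + ereal e" .
qed

theorem mainTheorem16:
  fixes gs :: "nat \<Rightarrow> 'a::real_normed_vector \<Rightarrow> real"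
    and g :: "'a \<Rightarrow> real"
    and c :: real
  assumes convex: "\<And>n. convex_on UNIV (gs n)"
    and pointwise: "\<And>y. (\<lambda>n. gs n y) \<longlonglongrightarrow> g y"
    and c_pos: "c > 0"
    and growth: "\<And>n y. \<bar>gs n y\<bar> \<le> c * (1 + norm y)"
  shows "gamma_converges weak_star_topology (\<lambda>n. conjugate (gs n)) (conjugate g)"
proof -
  define f where "f = (\<lambda>n. conjugate (gs n))"
  have conj_ge: "ereal (blinfun_apply z y - gs n y) \<le> f n z" for n z y
    unfolding f_def conjugate_def by (rule SUP_upper) simp
  have lip: "\<bar>gs n y - gs n y'\<bar> \<le> c * norm (y - y')" for n y y'
    by (rule convex_growth_lipschitz_abs[OF convex growth c_pos])
  have L: "conjugate g x \<le> gamma_liminf weak_star_topology f x" for x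
    unfolding conjugate_def
  proof (rule SUP_least)
    fix y assume "y \<in> (UNIV::'a set)"
    show "ereal (blinfun_apply x y - g y) \<le> gamma_liminf weak_star_topology f x"
    proof (rule ereal_real_eps)
      fix e :: real assume e: "e > 0"
      define V where "V = {z. blinfun_apply z y \<in> {blinfun_apply x y - e <..< blinfun_apply x y + e}}"
      have "openin weak_star_topology V" unfolding V_def by (rule weak_basic_open) simp
      moreover have "x \<in> V" unfolding V_def using e by simp
      ultimately have V: "V \<in> nbhds_in weak_star_topology x" unfolding nbhds_in_def by blast
      have "ereal (blinfun_apply x y - e - gs n y) \<le> (INF z\<in>V. f n z)" for n
      proof (rule INF_greatest)
        fix z assume "z \<in> V"
        then have "blinfun_apply x y - e - gs n y \<le> blinfun_apply z y - gs n y" unfolding V_def by simp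
        then have "ereal (blinfun_apply x y - e - gs n y) \<le> ereal (blinfun_apply z y - gs n y)" by simp
        then show "ereal (blinfun_apply x y - e - gs n y) \<le> f n z" using conj_ge[of z y n] by (rule order_trans)
      qed
      then have "liminf (\<lambda>n. ereal (blinfun_apply x y - e - gs n y)) \<le> liminf (\<lambda>n. INF z\<in>V. f n z)"
        by (intro Liminf_mono) simp
      moreover have "liminf (\<lambda>n. ereal (blinfun_apply x y - e - gs n y)) = ereal (blinfun_apply x y - e - g y)"
        by (intro lim_imp_Liminf tendsto_ereal tendsto_diff tendsto_const pointwise) simp
      moreover have "liminf (\<lambda>n. INF z\<in>V. f n z) \<le> gamma_liminf weak_star_topology f x"
        unfolding gamma_liminf_def by (rule SUP_upper[OF V])
      ultimately show "ereal (blinfun_apply x y - g y - e) \<le> gamma_liminf weak_star_topology f x"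
        by (simp add: algebra_simps)
    qed
  qed
  have U: "gamma_limsup weak_star_topology f x \<le> conjugate g x" for x
  proof (cases "conjugate g x = \<infinity>")
    case True then show ?thesis by simp
  next
    case False
    have "ereal (blinfun_apply x 0 - g 0) \<le> conjugate g x"
      unfolding conjugate_def by (rule SUP_upper) simp
    then have "conjugate g x \<noteq> - \<infinity>" by auto
    then obtain s where s: "conjugate g x = ereal s" using False by (cases "conjugate g x") auto
    have sy: "blinfun_apply x y - g y \<le> s" for y
    proof -
      have "ereal (blinfun_apply x y - g y) \<le> conjugate g x"
        unfolding conjugate_def by (rule SUP_upper) simp
      then show ?thesis using s by simp
    qed
    have "gamma_limsup weak_star_topology f x \<le> ereal s"
    proof (rule ereal_le_epsilon2)
      fix \<epsilon> :: real assume eps: "\<epsilon> > 0"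
      show "gamma_limsup weak_star_topology f x \<le> ereal s + ereal \<epsilon>"
        unfolding gamma_limsup_def
      proof (rule SUP_least)
        fix V assume "V \<in> nbhds_in weak_star_topology x"
        then obtain U where U: "openin weak_star_topology U" "x \<in> U" "U \<subseteq> V"
          unfolding nbhds_in_def by blast
        obtain F \<delta> where F: "finite F" and dl: "\<delta> > 0"
          and FU: "{z. \<forall>y\<in>F. \<bar>blinfun_apply z y - blinfun_apply x y\<bar> < \<delta>} \<subseteq> U"
          using weak_open_nbhd[OF U(1,2)] by blast
        define hs where "hs n y = gs n y - blinfun_apply x y + s + \<epsilon>" for n y
        define l where "l y = g y - blinfun_apply x y + s + \<epsilon>" for y
        define C where "C = c + norm x"
        have C: "C > 0" unfolding C_def using c_pos by (simp add: add_pos_nonneg)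
        have hlip: "\<bar>hs n y - hs n y'\<bar> \<le> C * norm (y - y')" for n y y'
        proof -
          have "\<bar>blinfun_apply x y - blinfun_apply x y'\<bar> \<le> norm x * norm (y - y')"
            using norm_blinfun[of x "y - y'"] by (simp add: blinfun.diff_right)
          moreover have "hs n y - hs n y' = (gs n y - gs n y') - (blinfun_apply x y - blinfun_apply x y')"
            unfolding hs_def by simp
          moreover have "\<bar>(gs n y - gs n y') - (blinfun_apply x y - blinfun_apply x y')\<bar>
              \<le> \<bar>gs n y - gs n y'\<bar> + \<bar>blinfun_apply x y - blinfun_apply x y'\<bar>" by (rule abs_triangle_ineq4)
          moreover have "C * norm (y - y') = c * norm (y - y') + norm x * norm (y - y')"
            unfolding C_def by (simp add: algebra_simps)
          ultimately show ?thesis using lip[of n y y'] by linarith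
        qed
        have hlim: "(\<lambda>n. hs n y) \<longlonglongrightarrow> l y" for y
          unfolding hs_def l_def by (intro tendsto_intros pointwise)
        have lge: "l y \<ge> \<epsilon>" for y using sy[of y] unfolding l_def by simp
        define d where "d = \<delta> / 2"
        have d: "d > 0" unfolding d_def using dl by simp
        define B where "B = l 0 + 1"
        have B: "B > 0" unfolding B_def using lge[of 0] eps by simp
        have ev1: "eventually (\<lambda>n. \<forall>y\<in>fbox F (B / d). hs n y \<ge> 0) sequentially"
          by (rule eventually_uniform_pos[OF compact_fbox[OF F] C hlip hlim eps lge])
        have ev2: "eventually (\<lambda>n. hs n 0 < B) sequentially"
          by (rule order_tendstoD(2)[OF hlim]) (simp add: B_def)
        have "eventually (\<lambda>n. (INF z\<in>V. f n z) \<le> ereal (s + \<epsilon>)) sequentially"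
          using ev1 ev2
        proof eventually_elim
          case (elim n)
          have cvh: "convex_on UNIV (hs n)"
            unfolding hs_def using convex_shift[OF convex blinfun.bounded_linear_right, of n x "s + \<epsilon>"]
            by (simp add: add.assoc)
          have H: "hs n (\<Sum>y\<in>F. a y *\<^sub>R y) + d * (\<Sum>y\<in>F. \<bar>a y\<bar>) \<ge> 0" for a
            by (rule core_pos[OF cvh F d B less_imp_le[OF elim(2)] elim(1)])
          obtain u where u: "bounded_linear u" "\<forall>y. u y \<le> hs n y" "\<forall>y\<in>F. \<bar>u y\<bar> \<le> d"
            using construct[OF cvh F d less_imp_le[OF C] hlip H] by blast
          define z where "z = x + Blinfun u"
          have zapp: "blinfun_apply z y = blinfun_apply x y + u y" for y
            unfolding z_def using bounded_linear_Blinfun_apply[OF u(1)] by (simp add: plus_blinfun.rep_eq)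
          have "z \<in> V"
          proof -
            have "\<forall>y\<in>F. \<bar>blinfun_apply z y - blinfun_apply x y\<bar> < \<delta>"
            proof
              fix y assume "y \<in> F"
              then have "\<bar>u y\<bar> \<le> d" using u(3) by blast
              then show "\<bar>blinfun_apply z y - blinfun_apply x y\<bar> < \<delta>" using zapp[of y] dl unfolding d_def by simp
            qed
            then show ?thesis using FU U(3) by blast
          qed
          moreover have "f n z \<le> ereal (s + \<epsilon>)"
            unfolding f_def conjugate_def
          proof (rule SUP_least)
            fix y assume "y \<in> (UNIV::'a set)"
            have "blinfun_apply z y - gs n y \<le> s + \<epsilon>"
            proof -
              have "u y \<le> gs n y - blinfun_apply x y + s + \<epsilon>" using u(2) unfolding hs_def by blast
              then show ?thesis using zapp[of y] by linarith
            qed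
            then show "ereal (blinfun_apply z y - gs n y) \<le> ereal (s + \<epsilon>)" by simp
          qed
          moreover have "(INF z\<in>V. f n z) \<le> f n z" if "z \<in> V" by (rule INF_lower) (rule that)
          ultimately show ?case by (blast intro: order_trans)
        qed
        then have "limsup (\<lambda>n. INF z\<in>V. f n z) \<le> ereal (s + \<epsilon>)" by (rule Limsup_bounded)
        then show "limsup (\<lambda>n. INF z\<in>V. f n z) \<le> ereal s + ereal \<epsilon>" by simp
      qed
    qed
    then show ?thesis using s by simp
  qed
  have LU: "gamma_liminf weak_star_topology f x \<le> gamma_limsup weak_star_topology f x" for x
    unfolding gamma_liminf_def gamma_limsup_def
    by (rule SUP_mono) (use Liminf_le_Limsup[OF sequentially_bot] in blast)
  show ?thesis
    unfolding gamma_converges_def f_def[symmetric]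
  proof (intro allI conjI)
    fix x
    have a: "conjugate g x \<le> gamma_liminf weak_star_topology f x" by (rule L)
    have b: "gamma_limsup weak_star_topology f x \<le> conjugate g x" by (rule U)
    have ab: "gamma_liminf weak_star_topology f x \<le> gamma_limsup weak_star_topology f x" by (rule LU)
    have c1: "gamma_liminf weak_star_topology f x \<le> conjugate g x" using ab b by (rule order_trans)
    have c2: "conjugate g x \<le> gamma_limsup weak_star_topology f x" using a ab by (rule order_trans)
    show "gamma_liminf weak_star_topology f x = conjugate g x" using c1 a by (rule antisym)
    show "gamma_limsup weak_star_topology f x = conjugate g x" using b c2 by (rule antisym)
  qed
qed

end
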